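(* Let $N,d,e,s\in\mathbb{N}$ (with $N,d\neq0$) and $\lambda,\lambda'\in\mathbb{Q}$, and let $L\subseteq\mathbb{Q}^2$ be the lattice generated by \[\left(\tfrac1N,\tfrac1N\right),\quad(\lambda,\lambda'),\quad\left(\tfrac ed\lambda+\tfrac{s}{Nd},\ \tfrac ed\lambda'+\tfrac{s}{Nd}\right).\] Let $r$ be any integer such that $r e/\gcd(d,e)\equiv1\pmod{d/\gcd(d,e)}$, and set \[\widetilde\lambda=\frac{\gcd(d,e)}{d}\lambda+\frac{rs}{Nd},\qquad\widetilde\lambda'=\frac{\gcd(d,e)}{d}\lambda'+\frac{rs}{Nd},\qquad\widetilde N=N\frac{\gcd(d,e)}{\gcd(d,e,s)}.\] Then $L$ is generated by $(1/\widetilde N,1/\widetilde N)$ and $(\widetilde\lambda,\widetilde\lambda')$. *)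

theory Defs
  imports Complex_Main "HOL-Number_Theory.Cong"
begin

definition lattice_gen :: "(rat \<times> rat) list \<Rightarrow> (rat \<times> rat) set" where
  "lattice_gen vs = {((\<Sum>i<length vs. of_int (ks i) * fst (vs ! i)),
                      (\<Sum>i<length vs. of_int (ks i) * snd (vs ! i))) | ks :: nat \<Rightarrow> int. True}"

end

theory Submission imports Defs begin

lemma lg3: "lattice_gen [p,q,w] = {(of_int a * fst p + of_int b * fst q + of_int c * fst w,
   of_int a * snd p + of_int b * snd q + of_int c * snd w) | a b c. True}"
proof -
  show ?thesis
    unfolding lattice_gen_def
    apply (simp add: numeral_3_eq_3)
    apply (rule set_eqI; rule iffI)
     apply auto[1]
    apply clarsimp
    subgoal for a b c by (rule exI[of _ "\<lambda>i. if i = 0 then a else if i = 1 then b else c"]) simp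
    done
qed

lemma lg2: "lattice_gen [p,q] = {(of_int a * fst p + of_int b * fst q,
   of_int a * snd p + of_int b * snd q) | a b. True}"
proof -
  show ?thesis
    unfolding lattice_gen_def
    apply (simp add: numeral_2_eq_2)
    apply (rule set_eqI; rule iffI)
     apply auto[1]
    apply clarsimp
    subgoal for a b by (rule exI[of _ "\<lambda>i. if i = 0 then a else b"]) simp
    done
qed

lemma idt1:
  fixes n l :: rat and G D E S H :: nat and r k a b c :: int
  assumes "n \<noteq> 0" "G \<noteq> 0" "D \<noteq> 0" "H \<noteq> 0" "r * int E = 1 + k * int D"
  shows "of_int a * (1/n) + of_int b * l + of_int c * (of_nat (H*G*E) / of_nat (H*G*D) * l + of_nat (H*S) / (n * of_nat (H*G*D)))
   = of_int (a * int G - b * r * int S - c * k * int S) * (1 / (n * of_nat (H*G) / of_nat H))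
     + of_int (b * int D + c * int E) * (of_nat (H*G) / of_nat (H*G*D) * l + of_int r * of_nat (H*S) / (n * of_nat (H*G*D)))"
proof -
  have hr: "of_int r * (of_nat E::rat) = 1 + of_int k * of_nat D"
    using assms(5) by (metis of_int_add of_int_mult of_int_of_nat_eq of_int_1)
  show ?thesis using assms(1-4) hr
    apply (simp add: field_simps)
    apply algebra
    done
qed

lemma idt2:
  fixes n l :: rat and G D E S H :: nat and r k a b x y :: int
  assumes "n \<noteq> 0" "G \<noteq> 0" "D \<noteq> 0" "H \<noteq> 0" "r * int E = 1 + k * int D" "x * int G + y * int S = 1"
  shows "of_int a * (1 / (n * of_nat (H*G) / of_nat H)) + of_int b * (of_nat (H*G) / of_nat (H*G*D) * l + of_int r * of_nat (H*S) / (n * of_nat (H*G*D)))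
   = of_int (a*x) * (1/n) + of_int (- a * y * int E - b * k) * l + of_int (a * y * int D + b * r) * (of_nat (H*G*E) / of_nat (H*G*D) * l + of_nat (H*S) / (n * of_nat (H*G*D)))"
proof -
  have hr: "of_int r * (of_nat E::rat) = 1 + of_int k * of_nat D"
    using assms(5) by (metis of_int_add of_int_mult of_int_of_nat_eq of_int_1)
  have hb: "of_int x * (of_nat G::rat) + of_int y * of_nat S = 1"
    using assms(6) by (metis of_int_add of_int_mult of_int_of_nat_eq of_int_1)
  show ?thesis using assms(1-4) hr hb
    apply (simp add: field_simps)
    apply algebra
    done
qed


lemma key:
  fixes n lam lam' :: rat and G D E S H :: nat and r k x y :: int
  assumes "n \<noteq> 0" "G \<noteq> 0" "D \<noteq> 0" "H \<noteq> 0" "r * int E = 1 + k * int D" "x * int G + y * int S = 1"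
  shows "lattice_gen
           [(1 / n, 1 / n),
            (lam, lam'),
            (of_nat (H*G*E) / of_nat (H*G*D) * lam + of_nat (H*S) / (n * of_nat (H*G*D)),
             of_nat (H*G*E) / of_nat (H*G*D) * lam' + of_nat (H*S) / (n * of_nat (H*G*D)))]
       = lattice_gen
           [(1 / (n * of_nat (H*G) / of_nat H),
             1 / (n * of_nat (H*G) / of_nat H)),
            (of_nat (H*G) / of_nat (H*G*D) * lam + of_int r * of_nat (H*S) / (n * of_nat (H*G*D)),
             of_nat (H*G) / of_nat (H*G*D) * lam' + of_int r * of_nat (H*S) / (n * of_nat (H*G*D)))]"
  unfolding lg3 lg2
proof (rule set_eqI, rule iffI)
  fix z assume "z \<in> {(of_int a * fst (1 / n, 1 / n) + of_int b * fst (lam, lam') +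
         of_int c * fst (of_nat (H*G*E) / of_nat (H*G*D) * lam + of_nat (H*S) / (n * of_nat (H*G*D)),
             of_nat (H*G*E) / of_nat (H*G*D) * lam' + of_nat (H*S) / (n * of_nat (H*G*D))),
         of_int a * snd (1 / n, 1 / n) + of_int b * snd (lam, lam') +
         of_int c * snd (of_nat (H*G*E) / of_nat (H*G*D) * lam + of_nat (H*S) / (n * of_nat (H*G*D)),
             of_nat (H*G*E) / of_nat (H*G*D) * lam' + of_nat (H*S) / (n * of_nat (H*G*D)))) | a b c. True}"
  then obtain a b c where z: "z = (of_int a * (1/n) + of_int b * lam + of_int c * (of_nat (H*G*E) / of_nat (H*G*D) * lam + of_nat (H*S) / (n * of_nat (H*G*D))),
      of_int a * (1/n) + of_int b * lam' + of_int c * (of_nat (H*G*E) / of_nat (H*G*D) * lam' + of_nat (H*S) / (n * of_nat (H*G*D))))"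
    by auto
  show "z \<in> {(of_int a * fst (1 / (n * of_nat (H*G) / of_nat H), 1 / (n * of_nat (H*G) / of_nat H)) +
           of_int b * fst (of_nat (H*G) / of_nat (H*G*D) * lam + of_int r * of_nat (H*S) / (n * of_nat (H*G*D)),
             of_nat (H*G) / of_nat (H*G*D) * lam' + of_int r * of_nat (H*S) / (n * of_nat (H*G*D))),
           of_int a * snd (1 / (n * of_nat (H*G) / of_nat H), 1 / (n * of_nat (H*G) / of_nat H)) +
           of_int b * snd (of_nat (H*G) / of_nat (H*G*D) * lam + of_int r * of_nat (H*S) / (n * of_nat (H*G*D)),
             of_nat (H*G) / of_nat (H*G*D) * lam' + of_int r * of_nat (H*S) / (n * of_nat (H*G*D)))) | a b. True}"
    unfolding z fst_conv snd_conv
    apply (rule CollectI, rule exI[of _ "a * int G - b * r * int S - c * k * int S"], rule exI[of _ "b * int D + c * int E"])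
    apply (rule conjI[OF _ TrueI], subst prod.inject, rule conjI)
     apply (rule idt1[OF assms(1-5)])
    apply (rule idt1[OF assms(1-5)])
    done
next
  fix z assume "z \<in> {(of_int a * fst (1 / (n * of_nat (H*G) / of_nat H), 1 / (n * of_nat (H*G) / of_nat H)) +
           of_int b * fst (of_nat (H*G) / of_nat (H*G*D) * lam + of_int r * of_nat (H*S) / (n * of_nat (H*G*D)),
             of_nat (H*G) / of_nat (H*G*D) * lam' + of_int r * of_nat (H*S) / (n * of_nat (H*G*D))),
           of_int a * snd (1 / (n * of_nat (H*G) / of_nat H), 1 / (n * of_nat (H*G) / of_nat H)) +
           of_int b * snd (of_nat (H*G) / of_nat (H*G*D) * lam + of_int r * of_nat (H*S) / (n * of_nat (H*G*D)),
             of_nat (H*G) / of_nat (H*G*D) * lam' + of_int r * of_nat (H*S) / (n * of_nat (H*G*D)))) | a b. True}"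
  then obtain a b where z: "z = (of_int a * (1 / (n * of_nat (H*G) / of_nat H)) + of_int b * (of_nat (H*G) / of_nat (H*G*D) * lam + of_int r * of_nat (H*S) / (n * of_nat (H*G*D))),
     of_int a * (1 / (n * of_nat (H*G) / of_nat H)) + of_int b * (of_nat (H*G) / of_nat (H*G*D) * lam' + of_int r * of_nat (H*S) / (n * of_nat (H*G*D))))"
    by auto
  show "z \<in> {(of_int a * fst (1 / n, 1 / n) + of_int b * fst (lam, lam') +
         of_int c * fst (of_nat (H*G*E) / of_nat (H*G*D) * lam + of_nat (H*S) / (n * of_nat (H*G*D)),
             of_nat (H*G*E) / of_nat (H*G*D) * lam' + of_nat (H*S) / (n * of_nat (H*G*D))),
         of_int a * snd (1 / n, 1 / n) + of_int b * snd (lam, lam') +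
         of_int c * snd (of_nat (H*G*E) / of_nat (H*G*D) * lam + of_nat (H*S) / (n * of_nat (H*G*D)),
             of_nat (H*G*E) / of_nat (H*G*D) * lam' + of_nat (H*S) / (n * of_nat (H*G*D)))) | a b c. True}"
    unfolding z fst_conv snd_conv
    apply (rule CollectI, rule exI[of _ "a*x"], rule exI[of _ "- a * y * int E - b * k"], rule exI[of _ "a * y * int D + b * r"])
    apply (rule conjI[OF _ TrueI], subst prod.inject, rule conjI)
     apply (rule idt2[OF assms])
    apply (rule idt2[OF assms])
    done
qed

theorem corollary6p2:
  fixes N d e s :: nat and lam lam' :: rat and r :: int
  assumes "N \<noteq> 0" and "d \<noteq> 0"
    and "[r * int (e div gcd d e) = 1] (mod int (d div gcd d e))"
  shows "lattice_gen
           [(1 / of_nat N, 1 / of_nat N),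
            (lam, lam'),
            (of_nat e / of_nat d * lam + of_nat s / (of_nat N * of_nat d),
             of_nat e / of_nat d * lam' + of_nat s / (of_nat N * of_nat d))]
       = lattice_gen
           [(1 / (of_nat N * of_nat (gcd d e) / of_nat (gcd d (gcd e s))),
             1 / (of_nat N * of_nat (gcd d e) / of_nat (gcd d (gcd e s)))),
            (of_nat (gcd d e) / of_nat d * lam + of_int r * of_nat s / (of_nat N * of_nat d),
             of_nat (gcd d e) / of_nat d * lam' + of_int r * of_nat s / (of_nat N * of_nat d))]"
proof -
  define g where "g = gcd d e"
  define h where "h = gcd d (gcd e s)"
  define D where "D = d div g"
  define E where "E = e div g"
  define G where "G = g div h"
  define S where "S = s div h"
  have g0: "g \<noteq> 0" using assms(2) g_def by simp
  have hg: "h = gcd g s" unfolding h_def g_def by (simp add: gcd.assoc)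
  have h0: "h \<noteq> 0" using hg g0 by simp
  have dD: "d = g * D" unfolding D_def g_def by simp
  have eE: "e = g * E" unfolding E_def g_def by simp
  have gG: "g = h * G" unfolding G_def hg by simp
  have sS: "s = h * S" unfolding S_def hg by simp
  have G0: "G \<noteq> 0" using gG g0 by auto
  have D0: "D \<noteq> 0" using dD assms(2) by auto
  obtain k' where k': "1 = r * int E + int D * k'"
    using assms(3) unfolding g_def[symmetric] D_def[symmetric] E_def[symmetric] cong_iff_lin
    by blast
  have k: "r * int E = 1 + (- k') * int D" using k' by (simp add: algebra_simps)
  obtain u v where uv0: "u * int g + v * int s = gcd (int g) (int s)"
    using bezout_int[of "int g" "int s"] by blast
  have uv: "u * int g + v * int s = int h" using uv0 hg by simp
  have "int h * (u * int G + v * int S) = int h * 1"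
    using uv unfolding gG sS by (simp add: algebra_simps)
  hence uv1: "u * int G + v * int S = 1" using h0 by simp
  have e1: "gcd d e = h * G" using g_def gG by simp
  have e2: "gcd d (gcd e s) = h" using h_def by simp
  have e3: "d = h * G * D" using dD gG by simp
  have e4: "e = h * G * E" using eE gG by simp
  have K: "?thesis" if "lattice_gen
           [(1 / of_nat N, 1 / of_nat N),
            (lam, lam'),
            (of_nat (h*G*E) / of_nat (h*G*D) * lam + of_nat (h*S) / (of_nat N * of_nat (h*G*D)),
             of_nat (h*G*E) / of_nat (h*G*D) * lam' + of_nat (h*S) / (of_nat N * of_nat (h*G*D)))]
       = lattice_gen
           [(1 / (of_nat N * of_nat (h*G) / of_nat h),
             1 / (of_nat N * of_nat (h*G) / of_nat h)),
            (of_nat (h*G) / of_nat (h*G*D) * lam + of_int r * of_nat (h*S) / (of_nat N * of_nat (h*G*D)),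
             of_nat (h*G) / of_nat (h*G*D) * lam' + of_int r * of_nat (h*S) / (of_nat N * of_nat (h*G*D)))]"
    using that unfolding e1 e2 unfolding e3[symmetric] e4[symmetric] sS[symmetric] .
  show ?thesis
    apply (rule K)
    apply (rule key[OF _ G0 D0 h0 k uv1])
    using assms(1) by simp
qed

end
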